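(* With the setting in the context, for all $s,s'\in\mathrm{hom}(C,G)_{-1}$ and $v,v'\in\mathrm{hom}(C,G)^1$: (i) $\mathcal A_s\mathcal B_v=\mathcal B_v\mathcal A_s$; (ii) $\mathcal A_s\mathcal A_{s'}=\delta(s,s')\mathcal A_s$ and $\mathcal B_v\mathcal B_{v'}=\delta(v,v')\mathcal B_v$, where $\delta(\cdot,\cdot)$ is the Kronecker delta; (iii) $\sum_{s\in\mathrm{hom}(C,G)_{-1}}\mathcal A_s=\mathbb 1$ and $\sum_{v\in\mathrm{hom}(C,G)^1}\mathcal B_v=\mathbb 1$.
   Context: $(C_\bullet,\partial^C_\bullet)$ is a chain complex with each $C_n$ free abelian on a finite set $K_n$, $K_n\ne\emptyset$ for finitely many $n$; $(G_\bullet,\partial^G_\bullet)$ is a chain complex of finite abelian groups. $\mathrm{hom}(C,G)^p=\prod_n\mathrm{Hom}(C_n,G_{n-p})$ with $(\delta^pf)_n=f_{n-1}\partial^C_n-(-1)^p\partial^G_{n-p}f_n$. $\mathrm{hom}(C,G)_p=\mathrm{Hom}(\mathrm{hom}(C,G)^p,U(1))$ (written additively), $\chi_m(f)=m(f)$, $\delta_1m=m\circ\delta^0$. $\mathcal H=\bigotimes_n\bigotimes_{x\in K_n}\mathbb C[G_n]$ with orthonormal basis $|f\rangle$, $f\in\mathrm{hom}(C,G)^0$; $P_t|f\rangle=|f+t\rangle$, $Q_m|f\rangle=\chi_m(f)|f\rangle$; $A_t=P_{\delta^{-1}t}$ ($t\in\mathrm{hom}(C,G)^{-1}$), $B_m=Q_{\delta_1m}$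 ($m\in\mathrm{hom}(C,G)_1$). $\mathcal A_s=\frac1{|\mathrm{hom}(C,G)^{-1}|}\sum_{t\in\mathrm{hom}(C,G)^{-1}}\chi_s(t)A_t$ and $\mathcal B_v=\frac1{|\mathrm{hom}(C,G)_1|}\sum_{m\in\mathrm{hom}(C,G)_1}\chi_m(v)B_m$. *)

theory Defs
  imports Complex_Main "HOL-Algebra.Algebra"
begin

text \<open>
  Chain complex C: C_n is free abelian on the finite set K n (n :: int); the boundary
  is given on basis elements by integer coefficients:
  d^C_n x = sum over y in K (n-1) of dC n x y * y,  for x in K n.
  Chain complex G: each G n is a finite abelian group (HOL-Algebra, written
  multiplicatively), with boundary maps dG n : G n -> G (n-1).
  Elements of Hom(C_n, G_(n-p)) are identified with their values on the basis K n.
\<close>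

definition setting ::
  "(int \<Rightarrow> 'k set) \<Rightarrow> (int \<Rightarrow> 'k \<Rightarrow> 'k \<Rightarrow> int) \<Rightarrow> (int \<Rightarrow> 'g monoid) \<Rightarrow> (int \<Rightarrow> 'g \<Rightarrow> 'g) \<Rightarrow> bool"
  where
  "setting K dC G dG \<longleftrightarrow>
     (\<forall>n. finite (K n)) \<and> finite {n. K n \<noteq> {}} \<and>
     (\<forall>n x z. x \<in> K n \<longrightarrow> z \<in> K (n - 2) \<longrightarrow>
        (\<Sum>y\<in>K (n - 1). dC n x y * dC (n - 1) y z) = 0) \<and>
     (\<forall>n. comm_group (G n) \<and> finite (carrier (G n))) \<and>
     (\<forall>n. dG n \<in> hom (G n) (G (n - 1))) \<and>
     (\<forall>n a. a \<in> carrier (G n) \<longrightarrow> dG (n - 1) (dG n a) = \<one>\<^bsub>G (n - 2)\<^esub>)"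

text \<open>hom(C,G)^p, elements extensional (undefined off the bases).\<close>
definition cochains :: "(int \<Rightarrow> 'k set) \<Rightarrow> (int \<Rightarrow> 'g monoid) \<Rightarrow> int \<Rightarrow> (int \<Rightarrow> 'k \<Rightarrow> 'g) set" where
  "cochains K G p = {f. \<forall>n x. (x \<in> K n \<longrightarrow> f n x \<in> carrier (G (n - p))) \<and>
                              (x \<notin> K n \<longrightarrow> f n x = undefined)}"

definition cadd :: "(int \<Rightarrow> 'k set) \<Rightarrow> (int \<Rightarrow> 'g monoid) \<Rightarrow> int \<Rightarrow> (int \<Rightarrow> 'k \<Rightarrow> 'g) \<Rightarrow> (int \<Rightarrow> 'k \<Rightarrow> 'g) \<Rightarrow> (int \<Rightarrow> 'k \<Rightarrow> 'g)" where
  "cadd K G p f g = (\<lambda>n x. if x \<in> K n then f n x \<otimes>\<^bsub>G (n - p)\<^esub> g n x else undefined)"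

definition cneg :: "(int \<Rightarrow> 'k set) \<Rightarrow> (int \<Rightarrow> 'g monoid) \<Rightarrow> int \<Rightarrow> (int \<Rightarrow> 'k \<Rightarrow> 'g) \<Rightarrow> (int \<Rightarrow> 'k \<Rightarrow> 'g)" where
  "cneg K G p f = (\<lambda>n x. if x \<in> K n then inv\<^bsub>G (n - p)\<^esub> (f n x) else undefined)"

text \<open>Coboundary (delta^p f)_n = f_(n-1) o d^C_n - (-1)^p d^G_(n-p) o f_n, on basis elements.\<close>
definition cobdry ::
  "(int \<Rightarrow> 'k set) \<Rightarrow> (int \<Rightarrow> 'k \<Rightarrow> 'k \<Rightarrow> int) \<Rightarrow> (int \<Rightarrow> 'g monoid) \<Rightarrow> (int \<Rightarrow> 'g \<Rightarrow> 'g)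
    \<Rightarrow> int \<Rightarrow> (int \<Rightarrow> 'k \<Rightarrow> 'g) \<Rightarrow> (int \<Rightarrow> 'k \<Rightarrow> 'g)" where
  "cobdry K dC G dG p f = (\<lambda>n x. if x \<in> K n then
      (finprod (G (n - 1 - p)) (\<lambda>y. f (n - 1) y [^]\<^bsub>G (n - 1 - p)\<^esub> dC n x y) (K (n - 1)))
      \<otimes>\<^bsub>G (n - 1 - p)\<^esub>
      (if even p then inv\<^bsub>G (n - 1 - p)\<^esub> (dG (n - p) (f n x)) else dG (n - p) (f n x))
    else undefined)"

text \<open>hom(C,G)_p = Hom(hom(C,G)^p, U(1)), U(1) = unit circle in the complex numbers;
  chi_m(f) = m(f). Elements extensional.\<close>
definition dchains :: "(int \<Rightarrow> 'k set) \<Rightarrow> (int \<Rightarrow> 'g monoid) \<Rightarrow> int \<Rightarrow> ((int \<Rightarrow> 'k \<Rightarrow> 'g) \<Rightarrow> complex) set" where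
  "dchains K G p = {m. (\<forall>f\<in>cochains K G p. norm (m f) = 1) \<and>
      (\<forall>f\<in>cochains K G p. \<forall>g\<in>cochains K G p. m (cadd K G p f g) = m f * m g) \<and>
      (\<forall>f. f \<notin> cochains K G p \<longrightarrow> m f = undefined)}"

definition dual_bdry ::
  "(int \<Rightarrow> 'k set) \<Rightarrow> (int \<Rightarrow> 'k \<Rightarrow> 'k \<Rightarrow> int) \<Rightarrow> (int \<Rightarrow> 'g monoid) \<Rightarrow> (int \<Rightarrow> 'g \<Rightarrow> 'g)
    \<Rightarrow> ((int \<Rightarrow> 'k \<Rightarrow> 'g) \<Rightarrow> complex) \<Rightarrow> ((int \<Rightarrow> 'k \<Rightarrow> 'g) \<Rightarrow> complex)" where
  "dual_bdry K dC G dG m = (\<lambda>f. if f \<in> cochains K G 0 then m (cobdry K dC G dG 0 f) else undefined)"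

text \<open>The Hilbert space: functions on the basis hom(C,G)^0 (|f> is the indicator of f).\<close>
definition Hsp :: "(int \<Rightarrow> 'k set) \<Rightarrow> (int \<Rightarrow> 'g monoid) \<Rightarrow> ((int \<Rightarrow> 'k \<Rightarrow> 'g) \<Rightarrow> complex) set" where
  "Hsp K G = {\<psi>. \<forall>f. f \<notin> cochains K G 0 \<longrightarrow> \<psi> f = 0}"

text \<open>P_t |f> = |f + t>, i.e. (P_t psi)(g) = psi(g - t).\<close>
definition Pop :: "(int \<Rightarrow> 'k set) \<Rightarrow> (int \<Rightarrow> 'g monoid) \<Rightarrow> (int \<Rightarrow> 'k \<Rightarrow> 'g)
    \<Rightarrow> ((int \<Rightarrow> 'k \<Rightarrow> 'g) \<Rightarrow> complex) \<Rightarrow> ((int \<Rightarrow> 'k \<Rightarrow> 'g) \<Rightarrow> complex)" where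
  "Pop K G t \<psi> = (\<lambda>g. if g \<in> cochains K G 0 then \<psi> (cadd K G 0 g (cneg K G 0 t)) else 0)"

text \<open>Q_m |f> = chi_m(f) |f>.\<close>
definition Qop :: "(int \<Rightarrow> 'k set) \<Rightarrow> (int \<Rightarrow> 'g monoid) \<Rightarrow> ((int \<Rightarrow> 'k \<Rightarrow> 'g) \<Rightarrow> complex)
    \<Rightarrow> ((int \<Rightarrow> 'k \<Rightarrow> 'g) \<Rightarrow> complex) \<Rightarrow> ((int \<Rightarrow> 'k \<Rightarrow> 'g) \<Rightarrow> complex)" where
  "Qop K G m \<psi> = (\<lambda>g. if g \<in> cochains K G 0 then m g * \<psi> g else 0)"

definition Aop where "Aop K dC G dG t = Pop K G (cobdry K dC G dG (-1) t)"
definition Bop where "Bop K dC G dG m = Qop K G (dual_bdry K dC G dG m)"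

definition calA where
  "calA K dC G dG s \<psi> = (\<lambda>g. (1 / of_nat (card (cochains K G (-1)))) *
      (\<Sum>t\<in>cochains K G (-1). s t * Aop K dC G dG t \<psi> g))"

definition calB where
  "calB K dC G dG v \<psi> = (\<lambda>g. (1 / of_nat (card (dchains K G 1))) *
      (\<Sum>m\<in>dchains K G 1. m v * Bop K dC G dG m \<psi> g))"

end

theory Submission imports Defs begin

definition ischar :: "('a,'b) monoid_scheme \<Rightarrow> 'a set \<Rightarrow> ('a \<Rightarrow> complex) \<Rightarrow> bool" where
 "ischar G H \<chi> \<longleftrightarrow> (\<forall>x\<in>H. norm (\<chi> x) = 1) \<and> (\<forall>x\<in>H. \<forall>y\<in>H. \<chi> (x \<otimes>\<^bsub>G\<^esub> y) = \<chi> x * \<chi> y)"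

locale fcg = comm_group + assumes fin: "finite (carrier G)"

lemma complex_root_exists:
  assumes "norm (z::complex) = 1" "(r::nat) > 0"
  shows "\<exists>w. w ^ r = z"
proof -
  have "(cis (Arg z / r)) ^ r = cis (Arg z)" using assms by (simp add: DeMoivre)
  also have "\<dots> = z" proof -
    have "z \<noteq> 0" using assms(1) by auto
    then show ?thesis using assms(1) by (simp add: cis_Arg sgn_div_norm)
  qed
  finally show ?thesis by blast
qed

context fcg begin

lemma ischar_one: assumes "ischar G H \<chi>" "\<one> \<in> H" shows "\<chi> \<one> = 1"
proof -
  have "\<chi> \<one> = \<chi> \<one> * \<chi> \<one>" using assms unfolding ischar_def by (metis l_one one_closed)
  moreover have "\<chi> \<one> \<noteq> 0" using assms unfolding ischar_def by force
  ultimately show ?thesis by (metis mult_cancel_right1)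
qed

lemma sg_pow_closed: assumes "subgroup H G" "x \<in> H" shows "x [^] (n::nat) \<in> H"
  using assms by (induction n) (auto simp: subgroup.one_closed subgroup.m_closed)

lemma ischar_pow: assumes "ischar G H \<chi>" "subgroup H G" "x \<in> H"
  shows "\<chi> (x [^] (n::nat)) = \<chi> x ^ n"
proof (induction n)
  case 0 then show ?case using ischar_one[OF assms(1)] assms(2) by (simp add: subgroup.one_closed)
next
  case (Suc n)
  have "x [^] n \<in> H" using assms(2,3)
    by (rule sg_pow_closed)
  then show ?case using Suc assms unfolding ischar_def by simp
qed

lemma ext_step:
  assumes H: "subgroup H G" and ch: "ischar G H \<chi>" and g: "g \<in> carrier G" "g \<notin> H"
    and r: "0 < r" "g [^] r \<in> H" "\<forall>k. 0 < k \<and> k < r \<longrightarrow> g [^] k \<notin> H"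
    and w: "\<omega> ^ r = \<chi> (g [^] r)"
  shows "\<exists>H' \<chi>'. subgroup H' G \<and> H \<subseteq> H' \<and> g \<in> H' \<and> ischar G H' \<chi>'
            \<and> (\<forall>x\<in>H. \<chi>' x = \<chi> x) \<and> \<chi>' g = \<omega>"
proof -
  have Hc: "H \<subseteq> carrier G" by (rule subgroup.subset[OF H])
  have Hm: "x \<otimes> y \<in> H" if "x \<in> H" "y \<in> H" for x y by (rule subgroup.m_closed[OF H that])
  have Hi: "inv x \<in> H" if "x \<in> H" for x by (rule subgroup.m_inv_closed[OF H that])
  have H1: "\<one> \<in> H" by (rule subgroup.one_closed[OF H])
  have chm: "\<chi> (x \<otimes> y) = \<chi> x * \<chi> y" if "x \<in> H" "y \<in> H" for x y
    using ch that unfolding ischar_def by simp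
  have chn: "norm (\<chi> x) = 1" if "x \<in> H" for x using ch that unfolding ischar_def by simp
  define N where "N = card (carrier G)"
  have gN: "g [^] N = \<one>" unfolding N_def using power_order_eq_one[OF fin g(1)] .
  have N0: "0 < N" unfolding N_def using fin g(1) card_gt_0_iff by auto
  have dvd: "r dvd k" if "g [^] k \<in> H" for k
  proof (rule ccontr)
    assume nd: "\<not> r dvd k"
    have "(g [^] r) [^] (k div r) \<otimes> g [^] (k mod r) = g [^] (r * (k div r)) \<otimes> g [^] (k mod r)"
      using g(1) by (simp add: nat_pow_pow)
    also have "\<dots> = g [^] (r * (k div r) + k mod r)" using g(1) by (simp add: nat_pow_mult)
    also have "\<dots> = g [^] k" by simp
    finally have e: "g [^] k = (g [^] r) [^] (k div r) \<otimes> g [^] (k mod r)" by simp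
    have "g [^] (k mod r) = inv ((g [^] r) [^] (k div r)) \<otimes> g [^] k"
      using e g(1) by (simp add: m_assoc[symmetric] l_inv)
    also have "\<dots> \<in> H" using Hm Hi that sg_pow_closed[OF H r(2)] by blast
    finally have "g [^] (k mod r) \<in> H" .
    moreover have "0 < k mod r" "k mod r < r" using nd r(1) by (auto simp: dvd_eq_mod_eq_0)
    ultimately show False using r(3) by blast
  qed
  have nw: "norm \<omega> = 1"
  proof -
    have "norm \<omega> ^ r = 1" using w chn[OF r(2)] by (metis norm_power)
    then have "norm \<omega> ^ r = 1 ^ r" by simp
    then show ?thesis by (rule power_eq_imp_eq_base[OF _ norm_ge_zero _ r(1)]) simp
  qed
  have wd1: "\<chi> h * \<omega> ^ j = \<chi> h' * \<omega> ^ j'"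
    if hh: "h \<in> H" "h' \<in> H" and e: "h \<otimes> g [^] j = h' \<otimes> g [^] j'" and jj: "j' \<le> j" for h h' j j'
  proof -
    define d where "d = j - j'"
    have jd: "j = j' + d" using jj d_def by simp
    have hc: "h \<in> carrier G" "h' \<in> carrier G" using hh Hc by auto
    have "(h \<otimes> g [^] d) \<otimes> g [^] j' = h' \<otimes> g [^] j'"
      using e hc g(1) by (simp add: jd nat_pow_mult[symmetric] m_ac)
    then have e2: "h \<otimes> g [^] d = h'" using hc g(1) by (meson m_closed nat_pow_closed right_cancel)
    then have "g [^] d = inv h \<otimes> h'" using hc g(1) by (metis inv_solve_left nat_pow_closed)
    also have "\<dots> \<in> H" using Hm Hi hh by blast
    finally have "r dvd d" using dvd by blast
    then obtain q where q: "d = r * q" by blast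
    have "h' = h \<otimes> (g [^] r) [^] q" using e2 g(1) by (simp add: q nat_pow_pow)
    then have "\<chi> h' = \<chi> h * \<chi> (g [^] r) ^ q"
      using chm hh ischar_pow[OF ch H r(2)] sg_pow_closed[OF H r(2)] by simp
    also have "\<dots> = \<chi> h * \<omega> ^ d" by (simp add: q w[symmetric] power_mult)
    finally show ?thesis by (simp add: jd power_add)
  qed
  have wd: "\<chi> h * \<omega> ^ j = \<chi> h' * \<omega> ^ j'"
    if "h \<in> H" "h' \<in> H" and e: "h \<otimes> g [^] j = h' \<otimes> g [^] j'" for h h' j j'
    using wd1[OF that] wd1[OF that(2,1) e[symmetric]] by (cases "j' \<le> j") auto
  define H' where "H' = {x. \<exists>h\<in>H. \<exists>j::nat. x = h \<otimes> g [^] j}"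
  define \<chi>' where "\<chi>' x = (SOME v. \<exists>h\<in>H. \<exists>j::nat. x = h \<otimes> g [^] j \<and> v = \<chi> h * \<omega> ^ j)" for x
  have ceq: "\<chi>' (h \<otimes> g [^] j) = \<chi> h * \<omega> ^ j" if "h \<in> H" for h j
    unfolding \<chi>'_def
    apply (rule someI2[where a="\<chi> h * \<omega> ^ j"])
    using that apply blast
    using that wd by metis
  have mulH': "(h \<otimes> g [^] (j::nat)) \<otimes> (h' \<otimes> g [^] (j'::nat)) = (h \<otimes> h') \<otimes> g [^] (j + j')"
    if "h \<in> H" "h' \<in> H" for h h' j j'
  proof -
    have "h \<in> carrier G" "h' \<in> carrier G" using that Hc by auto
    moreover have "g [^] (j + j') = g [^] j \<otimes> g [^] j'" using g(1) by (simp add: nat_pow_mult)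
    ultimately show ?thesis using g(1) by (simp add: m_ac)
  qed
  have sub: "subgroup H' G"
  proof
    show "H' \<subseteq> carrier G" unfolding H'_def using Hc g(1) by auto
  next
    fix x y assume "x \<in> H'" "y \<in> H'"
    then obtain h j h' j' where "h \<in> H" "h' \<in> H" "x = h \<otimes> g [^] (j::nat)" "y = h' \<otimes> g [^] (j'::nat)"
      unfolding H'_def by blast
    then show "x \<otimes> y \<in> H'" unfolding H'_def using mulH' Hm by blast
  next
    show "\<one> \<in> H'" unfolding H'_def using H1 by (auto intro!: bexI[of _ \<one>] exI[of _ 0])
  next
    fix x assume "x \<in> H'"
    then obtain h j where hj: "h \<in> H" "x = h \<otimes> g [^] (j::nat)" unfolding H'_def by blast
    have hc: "h \<in> carrier G" using hj Hc by auto
    have "g [^] (j * (N - 1)) \<otimes> g [^] j = \<one>"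
    proof -
      have "g [^] (j * (N - 1)) \<otimes> g [^] j = g [^] (j * N)"
        using g(1) N0 by (simp add: nat_pow_mult algebra_simps)
      also have "\<dots> = \<one>" using g(1) gN by (simp add: nat_pow_pow[symmetric] mult.commute)
      finally show ?thesis .
    qed
    then have "inv (g [^] j) = g [^] (j * (N - 1))" using g(1) by (simp add: inv_equality)
    then have "inv x = inv h \<otimes> g [^] (j * (N - 1))" using hj hc g(1) by (simp add: inv_mult)
    then show "inv x \<in> H'" unfolding H'_def using Hi hj by blast
  qed
  have chr: "ischar G H' \<chi>'"
    unfolding ischar_def
  proof (intro conjI ballI)
    fix x assume "x \<in> H'"
    then obtain h j where "h \<in> H" "x = h \<otimes> g [^] (j::nat)" unfolding H'_def by blast
    then show "norm (\<chi>' x) = 1" using ceq chn nw by (simp add: norm_mult norm_power)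
  next
    fix x y assume "x \<in> H'" "y \<in> H'"
    then obtain h j h' j' where hh: "h \<in> H" "h' \<in> H" "x = h \<otimes> g [^] (j::nat)" "y = h' \<otimes> g [^] (j'::nat)"
      unfolding H'_def by blast
    then show "\<chi>' (x \<otimes> y) = \<chi>' x * \<chi>' y"
      using mulH' ceq Hm chm by (simp add: power_add)
  qed
  have r0: "h \<otimes> g [^] (0::nat) = h" if "h \<in> H" for h using that Hc by auto
  have HH: "H \<subseteq> H'"
  proof
    fix h assume hH: "h \<in> H"
    show "h \<in> H'" unfolding H'_def using r0[OF hH, symmetric] hH by blast
  qed
  have gH: "g \<in> H'" unfolding H'_def using H1 g(1) by (auto intro!: bexI[of _ \<one>] exI[of _ 1])
  have ag: "\<forall>x\<in>H. \<chi>' x = \<chi> x" using ceq[of _ 0] r0 by fastforce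
  have "\<chi>' g = \<chi> \<one> * \<omega>" using ceq[OF H1, of 1] g(1) by simp
  then have "\<chi>' g = \<omega>" using ischar_one[OF ch H1] by simp
  then show ?thesis using sub HH gH chr ag by blast
qed

lemma extend:
  assumes "subgroup H G" "ischar G H \<chi>"
  shows "\<exists>\<chi>'. ischar G (carrier G) \<chi>' \<and> (\<forall>x\<in>H. \<chi>' x = \<chi> x)"
proof -
  have main: "\<forall>H \<chi>. card (carrier G) - card H = n \<longrightarrow> subgroup H G \<longrightarrow> ischar G H \<chi> \<longrightarrow>
      (\<exists>\<chi>'. ischar G (carrier G) \<chi>' \<and> (\<forall>x\<in>H. \<chi>' x = \<chi> x))" for n
  proof (induction n rule: less_induct)
    case (less n)
    show ?case
    proof (intro allI impI)
      fix H \<chi> assume n: "card (carrier G) - card H = n" and H: "subgroup H G" and ch: "ischar G H \<chi>"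
      show "\<exists>\<chi>'. ischar G (carrier G) \<chi>' \<and> (\<forall>x\<in>H. \<chi>' x = \<chi> x)"
      proof (cases "H = carrier G")
        case True then show ?thesis using ch by auto
      next
        case False
        have Hc: "H \<subseteq> carrier G" by (rule subgroup.subset[OF H])
        then obtain g where g: "g \<in> carrier G" "g \<notin> H" using False by blast
        define N where "N = card (carrier G)"
        have gN: "g [^] N = \<one>" unfolding N_def using power_order_eq_one[OF fin g(1)] .
        have N0: "0 < N" unfolding N_def using fin g(1) card_gt_0_iff by auto
        define r where "r = (LEAST k::nat. 0 < k \<and> g [^] k \<in> H)"
        have ex: "0 < N \<and> g [^] N \<in> H" using N0 gN subgroup.one_closed[OF H] by simp
        have r1: "0 < r \<and> g [^] r \<in> H" unfolding r_def by (rule LeastI[of _ N]) (rule ex)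
        have r3: "\<forall>k. 0 < k \<and> k < r \<longrightarrow> g [^] k \<notin> H"
          unfolding r_def using not_less_Least by blast
        have "norm (\<chi> (g [^] r)) = 1" using ch r1 unfolding ischar_def by blast
        then obtain \<omega> where w: "\<omega> ^ r = \<chi> (g [^] r)" using complex_root_exists r1 by blast
        obtain H' \<chi>' where H': "subgroup H' G" "H \<subseteq> H'" "g \<in> H'" "ischar G H' \<chi>'"
            "\<forall>x\<in>H. \<chi>' x = \<chi> x"
          using ext_step[OF H ch g(1) g(2) _ _ r3 w] r1 by blast
        have H'c: "H' \<subseteq> carrier G" by (rule subgroup.subset[OF H'(1)])
        have "card H < card H'"
          using H'(2,3) g(2) H'c fin by (intro psubset_card_mono) (auto intro: finite_subset)
        moreover have "card H' \<le> card (carrier G)" using H'c fin by (simp add: card_mono)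
        ultimately have "card (carrier G) - card H' < n" using n by linarith
        then obtain \<chi>'' where c1: "ischar G (carrier G) \<chi>''" and c2: "\<forall>x\<in>H'. \<chi>'' x = \<chi>' x"
          using less.IH H'(1,4) by blast
        have "\<forall>x\<in>H. \<chi>'' x = \<chi> x" using c2 H'(2,5) by auto
        then show ?thesis using c1 by blast
      qed
    qed
  qed
  show ?thesis using main assms by blast
qed

lemma separate:
  assumes a: "a \<in> carrier G" "a \<noteq> \<one>"
  shows "\<exists>\<chi>. ischar G (carrier G) \<chi> \<and> \<chi> a \<noteq> 1"
proof -
  have H: "subgroup {\<one>} G" by (rule triv_subgroup)
  have ch: "ischar G {\<one>} (\<lambda>_. 1)" unfolding ischar_def by simp
  define N where "N = card (carrier G)"
  have gN: "a [^] N = \<one>" unfolding N_def using power_order_eq_one[OF fin a(1)] .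
  have N0: "0 < N" unfolding N_def using fin a(1) card_gt_0_iff by auto
  define r where "r = (LEAST k::nat. 0 < k \<and> a [^] k \<in> {\<one>})"
  have ex: "0 < N \<and> a [^] N \<in> {\<one>}" using N0 gN by simp
  have r1: "0 < r \<and> a [^] r \<in> {\<one>}" unfolding r_def by (rule LeastI[of _ N]) (rule ex)
  have r3: "\<forall>k. 0 < k \<and> k < r \<longrightarrow> a [^] k \<notin> {\<one>}"
    unfolding r_def using not_less_Least by blast
  have "r \<noteq> 1" using r1 a by auto
  then have r2: "2 \<le> r" using r1 by linarith
  have "card {z::complex. z ^ r = 1} = r" using r1 by (intro card_roots_unity_eq) simp
  moreover have "card {z::complex. z ^ r = 1} \<le> 1" if "{z::complex. z ^ r = 1} \<subseteq> {1}"
    using card_mono[OF _ that] by simp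
  ultimately have "\<not> {z::complex. z ^ r = 1} \<subseteq> {1}" using r2 by linarith
  then obtain \<omega> where "\<omega> \<in> {z::complex. z ^ r = 1}" "\<omega> \<notin> {1}" by (meson subsetI)
  then have w: "\<omega> ^ r = 1" "\<omega> \<noteq> 1" by auto
  have w': "\<omega> ^ r = (\<lambda>_. 1) (a [^] r)" using w by simp
  obtain H' \<chi>' where H': "subgroup H' G" "{\<one>} \<subseteq> H'" "a \<in> H'" "ischar G H' \<chi>'" "\<chi>' a = \<omega>"
    using ext_step[OF H ch a(1) _ _ _ r3 w'] r1 a by auto
  obtain \<chi> where "ischar G (carrier G) \<chi>" "\<forall>x\<in>H'. \<chi> x = \<chi>' x" using extend[OF H'(1,4)] by blast
  then show ?thesis using H'(3,5) w(2) by auto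
qed

end

definition chars :: "('a,'b) monoid_scheme \<Rightarrow> ('a \<Rightarrow> complex) set" where
  "chars G = {m. ischar G (carrier G) m \<and> (\<forall>x. x \<notin> carrier G \<longrightarrow> m x = undefined)}"

definition echar :: "('a,'b) monoid_scheme \<Rightarrow> 'a \<Rightarrow> complex" where
  "echar G = (\<lambda>x. if x \<in> carrier G then 1 else undefined)"

definition cmul :: "('a,'b) monoid_scheme \<Rightarrow> ('a \<Rightarrow> complex) \<Rightarrow> ('a \<Rightarrow> complex) \<Rightarrow> 'a \<Rightarrow> complex" where
  "cmul G m m' = (\<lambda>x. if x \<in> carrier G then m x * m' x else undefined)"

definition ccnj :: "('a,'b) monoid_scheme \<Rightarrow> ('a \<Rightarrow> complex) \<Rightarrow> 'a \<Rightarrow> complex" where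
  "ccnj G m = (\<lambda>x. if x \<in> carrier G then cnj (m x) else undefined)"

lemma norm1_cnj: "norm (z::complex) = 1 \<Longrightarrow> z * cnj z = 1"
  using complex_norm_square[of z] by simp

context fcg begin

lemma chars_D:
  assumes "m \<in> chars G"
  shows "\<And>x. x \<in> carrier G \<Longrightarrow> norm (m x) = 1"
    and "\<And>x y. x \<in> carrier G \<Longrightarrow> y \<in> carrier G \<Longrightarrow> m (x \<otimes> y) = m x * m y"
    and "\<And>x. x \<notin> carrier G \<Longrightarrow> m x = undefined"
  using assms unfolding chars_def ischar_def by auto

lemma chars_one_val: "m \<in> chars G \<Longrightarrow> m \<one> = 1"
  using ischar_one[of "carrier G" m] unfolding chars_def by auto

lemma chars_inv: assumes "m \<in> chars G" "x \<in> carrier G" shows "m (inv x) = cnj (m x)"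
proof -
  have "m x * m (inv x) = 1" using chars_D(2)[OF assms(1), of x "inv x"] assms chars_one_val[OF assms(1)] by simp
  moreover have "m x * cnj (m x) = 1" using norm1_cnj chars_D(1)[OF assms] by simp
  ultimately have "m x * m (inv x) = m x * cnj (m x)" by simp
  moreover have "m x \<noteq> 0" using chars_D(1)[OF assms] by auto
  ultimately show ?thesis by simp
qed

lemma chars_eqI: assumes "m \<in> chars G" "m' \<in> chars G" "\<And>x. x \<in> carrier G \<Longrightarrow> m x = m' x"
  shows "m = m'"
proof (rule ext)
  fix x show "m x = m' x"
    by (cases "x \<in> carrier G") (simp_all add: assms(3) chars_D(3)[OF assms(1)] chars_D(3)[OF assms(2)])
qed

lemma echar_in: "echar G \<in> chars G"
  unfolding chars_def ischar_def echar_def by auto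

lemma cmul_in: assumes "m \<in> chars G" "m' \<in> chars G" shows "cmul G m m' \<in> chars G"
  using chars_D[OF assms(1)] chars_D[OF assms(2)]
  unfolding chars_def ischar_def cmul_def by (auto simp: norm_mult)

lemma ccnj_in: assumes "m \<in> chars G" shows "ccnj G m \<in> chars G"
  using chars_D[OF assms(1)] unfolding chars_def ischar_def ccnj_def by auto

lemma finite_chars: "finite (chars G)"
proof -
  define N where "N = card (carrier G)"
  have "carrier G \<noteq> {}" by auto
  then have N0: "1 \<le> N" unfolding N_def using fin by (simp add: Suc_le_eq card_gt_0_iff)
  have vals: "m x ^ N = 1" if "m \<in> chars G" "x \<in> carrier G" for m x
  proof -
    have "m (x [^] N) = m x ^ N"
      using ischar_pow[of "carrier G" m x N] that subgroup_self unfolding chars_def by auto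
    then show ?thesis using that power_order_eq_one[OF fin that(2)] chars_one_val[OF that(1)]
      unfolding N_def by simp
  qed
  have inj: "inj_on (\<lambda>m. restrict m (carrier G)) (chars G)"
  proof (rule inj_onI)
    fix m m' assume "m \<in> chars G" "m' \<in> chars G" "restrict m (carrier G) = restrict m' (carrier G)"
    then show "m = m'"
    proof (intro chars_eqI)
      fix x assume "x \<in> carrier G"
      then show "m x = m' x" using fun_cong[OF \<open>restrict m (carrier G) = restrict m' (carrier G)\<close>, of x] by simp
    qed
  qed
  have sub: "(\<lambda>m. restrict m (carrier G)) ` chars G \<subseteq> PiE (carrier G) (\<lambda>_. {z. z ^ N = 1})"
    using vals by auto
  have fP: "finite (PiE (carrier G) (\<lambda>_. {z::complex. z ^ N = 1}))"
    using fin finite_roots_unity[OF N0] by (intro finite_PiE) auto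
  have "finite ((\<lambda>m. restrict m (carrier G)) ` chars G)" by (rule finite_subset[OF sub fP])
  then show ?thesis using inj by (rule finite_imageD)
qed

lemma sum_shift: assumes "y \<in> carrier G"
  shows "(\<Sum>x\<in>carrier G. f (y \<otimes> x)) = (\<Sum>x\<in>carrier G. f x)"
proof -
  have "bij_betw (\<lambda>x. y \<otimes> x) (carrier G) (carrier G)"
    unfolding bij_betw_def using inj_on_cmult[OF assms] surj_const_mult[OF assms] by blast
  then show ?thesis by (rule sum.reindex_bij_betw)
qed

lemma orth_x: assumes "m \<in> chars G" "m' \<in> chars G"
  shows "(\<Sum>x\<in>carrier G. m x * cnj (m' x)) = (if m = m' then of_nat (card (carrier G)) else 0)"
proof (cases "m = m'")
  case True
  then have "(\<Sum>x\<in>carrier G. m x * cnj (m' x)) = (\<Sum>x\<in>carrier G. 1)"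
    using norm1_cnj chars_D(1)[OF assms(1)] by (intro sum.cong) auto
  then show ?thesis using True by simp
next
  case False
  then obtain y where y: "y \<in> carrier G" "m y \<noteq> m' y" using chars_eqI[OF assms] by blast
  define c where "c = m y * cnj (m' y)"
  have c1: "c \<noteq> 1"
  proof
    assume "c = 1"
    then have "m y * (cnj (m' y) * m' y) = m' y" unfolding c_def by (metis mult.assoc mult_1)
    then show False using y norm1_cnj[OF chars_D(1)[OF assms(2) y(1)]] by (simp add: mult.commute)
  qed
  define S where "S = (\<Sum>x\<in>carrier G. m x * cnj (m' x))"
  have "S = (\<Sum>x\<in>carrier G. m (y \<otimes> x) * cnj (m' (y \<otimes> x)))" unfolding S_def by (rule sum_shift[OF y(1), symmetric])
  also have "\<dots> = (\<Sum>x\<in>carrier G. c * (m x * cnj (m' x)))"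
    using chars_D(2)[OF assms(1)] chars_D(2)[OF assms(2)] y(1) by (intro sum.cong) (auto simp: c_def)
  also have "\<dots> = c * S" unfolding S_def by (simp add: sum_distrib_left)
  finally have "(1 - c) * S = 0" by (simp add: algebra_simps)
  then have "S = 0" using c1 by simp
  then show ?thesis using False S_def by simp
qed

lemma orth_m: assumes x: "x \<in> carrier G"
  shows "(\<Sum>m\<in>chars G. m x) = (if x = \<one> then of_nat (card (chars G)) else 0)"
proof (cases "x = \<one>")
  case True
  have "(\<Sum>m\<in>chars G. m \<one>) = (\<Sum>m\<in>chars G. 1)" by (rule sum.cong) (auto simp: chars_one_val)
  then show ?thesis using True by simp
next
  case False
  obtain \<chi> where ch: "ischar G (carrier G) \<chi>" "\<chi> x \<noteq> 1" using separate[OF x False] by blast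
  define m0 where "m0 = (\<lambda>y. if y \<in> carrier G then \<chi> y else undefined)"
  have m0: "m0 \<in> chars G" using ch unfolding m0_def chars_def ischar_def by auto
  have m0x: "m0 x \<noteq> 1" using ch x unfolding m0_def by simp
  have cm2: "m0 y * cnj (m0 y) = 1" if "y \<in> carrier G" for y using norm1_cnj[OF chars_D(1)[OF m0 that]] .
  have cm1: "cnj (m0 y) * m0 y = 1" if "y \<in> carrier G" for y using cm2[OF that] by (simp add: mult.commute)
  have bij: "bij_betw (cmul G m0) (chars G) (chars G)"
  proof (rule bij_betw_byWitness[where f'="cmul G (ccnj G m0)"])
    show "\<forall>a\<in>chars G. cmul G (ccnj G m0) (cmul G m0 a) = a"
    proof
      fix a assume a: "a \<in> chars G"
      show "cmul G (ccnj G m0) (cmul G m0 a) = a"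
      proof (rule chars_eqI[OF cmul_in[OF ccnj_in[OF m0] cmul_in[OF m0 a]] a])
        fix y assume "y \<in> carrier G"
        then show "cmul G (ccnj G m0) (cmul G m0 a) y = a y" using cm1 by (simp add: cmul_def ccnj_def mult.assoc[symmetric])
      qed
    qed
    show "\<forall>a\<in>chars G. cmul G m0 (cmul G (ccnj G m0) a) = a"
    proof
      fix a assume a: "a \<in> chars G"
      show "cmul G m0 (cmul G (ccnj G m0) a) = a"
      proof (rule chars_eqI[OF cmul_in[OF m0 cmul_in[OF ccnj_in[OF m0] a]] a])
        fix y assume "y \<in> carrier G"
        then show "cmul G m0 (cmul G (ccnj G m0) a) y = a y" using cm2 by (simp add: cmul_def ccnj_def mult.assoc[symmetric])
      qed
    qed
    show "cmul G m0 ` chars G \<subseteq> chars G" using cmul_in[OF m0] by auto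
    show "cmul G (ccnj G m0) ` chars G \<subseteq> chars G" using cmul_in[OF ccnj_in[OF m0]] by auto
  qed
  define S where "S = (\<Sum>m\<in>chars G. m x)"
  have "S = (\<Sum>m\<in>chars G. cmul G m0 m x)" unfolding S_def
    using sum.reindex_bij_betw[OF bij, of "\<lambda>m. m x"] by simp
  also have "\<dots> = (\<Sum>m\<in>chars G. m0 x * m x)" using x by (simp add: cmul_def)
  also have "\<dots> = m0 x * S" unfolding S_def by (simp add: sum_distrib_left)
  finally have "(1 - m0 x) * S = 0" by (simp add: algebra_simps)
  then have "S = 0" using m0x by simp
  then show ?thesis using False S_def by simp
qed

lemma card_chars: "card (chars G) = card (carrier G)"
proof -
  have "(\<Sum>x\<in>carrier G. \<Sum>m\<in>chars G. m x) = (\<Sum>x\<in>carrier G. if x = \<one> then of_nat (card (chars G)) else 0)"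
    using orth_m by (intro sum.cong) auto
  also have "\<dots> = of_nat (card (chars G))" using fin by (simp add: sum.delta)
  finally have 1: "(\<Sum>x\<in>carrier G. \<Sum>m\<in>chars G. m x) = (of_nat (card (chars G)) :: complex)" .
  have "(\<Sum>m\<in>chars G. \<Sum>x\<in>carrier G. m x) = (\<Sum>m\<in>chars G. \<Sum>x\<in>carrier G. m x * cnj (echar G x))"
    by (intro sum.cong) (auto simp: echar_def)
  also have "\<dots> = (\<Sum>m\<in>chars G. if m = echar G then of_nat (card (carrier G)) else 0)"
    using orth_x echar_in by (intro sum.cong) auto
  also have "\<dots> = of_nat (card (carrier G))" using finite_chars echar_in by (simp add: sum.delta)
  finally have 2: "(\<Sum>m\<in>chars G. \<Sum>x\<in>carrier G. m x) = (of_nat (card (carrier G)) :: complex)" .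
  have "(of_nat (card (chars G)) :: complex) = of_nat (card (carrier G))"
  proof -
    have "(\<Sum>x\<in>carrier G. \<Sum>m\<in>chars G. m x) = (\<Sum>m\<in>chars G. \<Sum>x\<in>carrier G. m x)"
      by (rule sum.swap)
    then show ?thesis using 1 2 by simp
  qed
  then show ?thesis by (simp only: of_nat_eq_iff)
qed

end

lemma (in comm_group) finprod_int_pow:
  assumes "finite A" "f \<in> A \<rightarrow> carrier G"
  shows "(finprod G f A) [^] (k::int) = finprod G (\<lambda>y. f y [^] k) A"
  using assms
proof (induction A rule: finite_induct)
  case empty then show ?case by simp
next
  case (insert a A)
  have fa: "f a \<in> carrier G" and fA: "f \<in> A \<rightarrow> carrier G" using insert.prems by auto
  have "finprod G f (insert a A) [^] k = (f a \<otimes> finprod G f A) [^] k"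
    using insert fa fA by simp
  also have "\<dots> = f a [^] k \<otimes> finprod G f A [^] k" using fa fA by (simp add: int_pow_distrib)
  also have "\<dots> = f a [^] k \<otimes> finprod G (\<lambda>y. f y [^] k) A" using insert.IH fA by simp
  also have "\<dots> = finprod G (\<lambda>y. f y [^] k) (insert a A)"
    using insert fa fA by (subst finprod_insert) (auto simp: Pi_def)
  finally show ?case .
qed

lemma (in comm_group) finprod_pow_sum:
  assumes "finite A" "a \<in> carrier G"
  shows "finprod G (\<lambda>y. a [^] (c y :: int)) A = a [^] (\<Sum>y\<in>A. c y)"
  using assms(1)
proof (induction A rule: finite_induct)
  case empty then show ?case by simp
next
  case (insert x A)
  have "finprod G (\<lambda>y. a [^] (c y :: int)) (insert x A) = a [^] c x \<otimes> finprod G (\<lambda>y. a [^] (c y :: int)) A"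
    using insert assms(2) by (subst finprod_insert) (auto simp: Pi_def)
  also have "\<dots> = a [^] (c x + (\<Sum>y\<in>A. c y))" using insert.IH assms(2) by (simp add: int_pow_mult)
  finally show ?case using insert by simp
qed

lemma (in comm_group) finprod_swap:
  assumes "finite A" "finite B" "\<And>y z. y \<in> A \<Longrightarrow> z \<in> B \<Longrightarrow> f y z \<in> carrier G"
  shows "finprod G (\<lambda>y. finprod G (\<lambda>z. f y z) B) A = finprod G (\<lambda>z. finprod G (\<lambda>y. f y z) A) B"
  using assms
proof (induction A rule: finite_induct)
  case empty then show ?case by simp
next
  case (insert a A)
  have c1: "(\<lambda>z. f a z) \<in> B \<rightarrow> carrier G" using insert.prems by auto
  have c2: "(\<lambda>z. finprod G (\<lambda>y. f y z) A) \<in> B \<rightarrow> carrier G"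
    using insert.prems by (auto intro!: finprod_closed simp: Pi_def)
  have "finprod G (\<lambda>y. finprod G (\<lambda>z. f y z) B) (insert a A)
      = finprod G (\<lambda>z. f a z) B \<otimes> finprod G (\<lambda>y. finprod G (\<lambda>z. f y z) B) A"
    using insert by (subst finprod_insert) (auto simp: Pi_def)
  also have "\<dots> = finprod G (\<lambda>z. f a z) B \<otimes> finprod G (\<lambda>z. finprod G (\<lambda>y. f y z) A) B"
    using insert by simp
  also have "\<dots> = finprod G (\<lambda>z. f a z \<otimes> finprod G (\<lambda>y. f y z) A) B"
    using c1 c2 by (simp add: finprod_multf)
  also have "\<dots> = finprod G (\<lambda>z. finprod G (\<lambda>y. f y z) (insert a A)) B"
    using insert by (intro finprod_cong') (auto simp: Pi_def)
  finally show ?case .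
qed

lemma hom_finprod_cg:
  assumes G: "comm_group G" and H: "comm_group H" and h: "h \<in> hom G H"
    and A: "finite A" and f: "f \<in> A \<rightarrow> carrier G"
  shows "h (finprod G f A) = finprod H (\<lambda>y. h (f y)) A"
proof -
  interpret G: comm_group G by (rule G)
  interpret H: comm_group H by (rule H)
  show ?thesis
  using A f
proof (induction A rule: finite_induct)
  case empty
  then show ?case using G H h by (simp add: group_hom.hom_one group_hom_axioms.intro group_hom_def comm_group.axioms(2))
next
  case (insert a A)
  have fa: "f a \<in> carrier G" and fA: "f \<in> A \<rightarrow> carrier G" using insert.prems by auto
  have hc: "\<And>x. x \<in> carrier G \<Longrightarrow> h x \<in> carrier H" using h by (auto simp: hom_def Pi_def)
  have "h (finprod G f (insert a A)) = h (f a \<otimes>\<^bsub>G\<^esub> finprod G f A)" using insert fa by simp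
  also have "\<dots> = h (f a) \<otimes>\<^bsub>H\<^esub> h (finprod G f A)" using h fa fA by (simp add: hom_mult)
  also have "\<dots> = h (f a) \<otimes>\<^bsub>H\<^esub> finprod H (\<lambda>y. h (f y)) A" using insert.IH fA by simp
  also have "\<dots> = finprod H (\<lambda>y. h (f y)) (insert a A)"
    using insert fa fA hc by (subst H.finprod_insert) (auto simp: Pi_def)
  finally show ?case .
qed
qed

definition czero :: "(int \<Rightarrow> 'k set) \<Rightarrow> (int \<Rightarrow> 'g monoid) \<Rightarrow> int \<Rightarrow> (int \<Rightarrow> 'k \<Rightarrow> 'g)" where
  "czero K G p = (\<lambda>n x. if x \<in> K n then \<one>\<^bsub>G (n - p)\<^esub> else undefined)"

definition CG :: "(int \<Rightarrow> 'k set) \<Rightarrow> (int \<Rightarrow> 'g monoid) \<Rightarrow> int \<Rightarrow> (int \<Rightarrow> 'k \<Rightarrow> 'g) monoid" where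
  "CG K G p = \<lparr>carrier = cochains K G p, monoid.mult = cadd K G p, one = czero K G p\<rparr>"

locale sett =
  fixes K :: "int \<Rightarrow> 'k set" and dC :: "int \<Rightarrow> 'k \<Rightarrow> 'k \<Rightarrow> int"
    and G :: "int \<Rightarrow> 'g monoid" and dG :: "int \<Rightarrow> 'g \<Rightarrow> 'g"
  assumes S: "setting K dC G dG"
begin

lemma finK: "finite (K n)" using S unfolding setting_def by blast
lemma finI: "finite {n. K n \<noteq> {}}" using S unfolding setting_def by blast
lemma cg: "comm_group (G n)" using S unfolding setting_def by blast
lemma finG: "finite (carrier (G n))" using S unfolding setting_def by blast
lemma dGh: "dG n \<in> hom (G n) (G (n - 1))" using S unfolding setting_def by blast
lemma dGG: "a \<in> carrier (G n) \<Longrightarrow> dG (n - 1) (dG n a) = \<one>\<^bsub>G (n - 2)\<^esub>"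
  using S unfolding setting_def by blast
lemma dCC: "x \<in> K n \<Longrightarrow> z \<in> K (n - 2) \<Longrightarrow> (\<Sum>y\<in>K (n - 1). dC n x y * dC (n - 1) y z) = 0"
  using S unfolding setting_def by blast

lemma cochainsD:
  "f \<in> cochains K G p \<Longrightarrow> x \<in> K n \<Longrightarrow> f n x \<in> carrier (G (n - p))"
  "f \<in> cochains K G p \<Longrightarrow> x \<notin> K n \<Longrightarrow> f n x = undefined"
  unfolding cochains_def by auto

lemma cochains_eqI:
  assumes "f \<in> cochains K G p" "g \<in> cochains K G p" "\<And>n x. x \<in> K n \<Longrightarrow> f n x = g n x"
  shows "f = g"
proof (intro ext)
  fix n x show "f n x = g n x"
    by (cases "x \<in> K n") (simp_all add: assms(3) cochainsD(2)[OF assms(1)] cochainsD(2)[OF assms(2)])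
qed

lemma cadd_in: "f \<in> cochains K G p \<Longrightarrow> g \<in> cochains K G p \<Longrightarrow> cadd K G p f g \<in> cochains K G p"
  unfolding cochains_def cadd_def using cg by (auto intro: comm_group.axioms(2)[THEN group.axioms(1), THEN monoid.m_closed])

lemma czero_in: "czero K G p \<in> cochains K G p"
  unfolding cochains_def czero_def using cg by (auto intro: comm_group.axioms(2)[THEN group.axioms(1), THEN monoid.one_closed])

lemma cneg_in: "f \<in> cochains K G p \<Longrightarrow> cneg K G p f \<in> cochains K G p"
  unfolding cochains_def cneg_def using cg by (auto intro: comm_group.axioms(2)[THEN group.inv_closed])

lemma CG_cg: "comm_group (CG K G p)"
proof (rule comm_groupI)
  fix x y assume "x \<in> carrier (CG K G p)" "y \<in> carrier (CG K G p)"
  then show "x \<otimes>\<^bsub>CG K G p\<^esub> y \<in> carrier (CG K G p)" unfolding CG_def using cadd_in by simp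
next
  show "\<one>\<^bsub>CG K G p\<^esub> \<in> carrier (CG K G p)" unfolding CG_def using czero_in by simp
next
  fix x y z assume a: "x \<in> carrier (CG K G p)" "y \<in> carrier (CG K G p)" "z \<in> carrier (CG K G p)"
  show "x \<otimes>\<^bsub>CG K G p\<^esub> y \<otimes>\<^bsub>CG K G p\<^esub> z = x \<otimes>\<^bsub>CG K G p\<^esub> (y \<otimes>\<^bsub>CG K G p\<^esub> z)"
    unfolding CG_def
  proof (simp, intro ext)
    fix n k
    interpret Gi: comm_group "G (n - p)" by (rule cg)
    show "cadd K G p (cadd K G p x y) z n k = cadd K G p x (cadd K G p y z) n k"
      using a cochainsD(1)[of _ p k n] unfolding CG_def cadd_def by (simp add: Gi.m_assoc)
  qed
next
  fix x y assume a: "x \<in> carrier (CG K G p)" "y \<in> carrier (CG K G p)"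
  show "x \<otimes>\<^bsub>CG K G p\<^esub> y = y \<otimes>\<^bsub>CG K G p\<^esub> x"
    unfolding CG_def
  proof (simp, intro ext)
    fix n k
    interpret Gi: comm_group "G (n - p)" by (rule cg)
    show "cadd K G p x y n k = cadd K G p y x n k"
      using a cochainsD(1)[of _ p k n] unfolding CG_def cadd_def by (simp add: Gi.m_comm)
  qed
next
  fix x assume a: "x \<in> carrier (CG K G p)"
  show "\<one>\<^bsub>CG K G p\<^esub> \<otimes>\<^bsub>CG K G p\<^esub> x = x"
    unfolding CG_def
  proof (simp, intro ext)
    fix n k
    interpret Gi: comm_group "G (n - p)" by (rule cg)
    show "cadd K G p (czero K G p) x n k = x n k"
      using a cochainsD[of x p k n] unfolding CG_def cadd_def czero_def by simp
  qed
next
  fix x assume a: "x \<in> carrier (CG K G p)"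
  show "\<exists>y\<in>carrier (CG K G p). y \<otimes>\<^bsub>CG K G p\<^esub> x = \<one>\<^bsub>CG K G p\<^esub>"
  proof (intro bexI)
    show "cneg K G p x \<in> carrier (CG K G p)" using a cneg_in unfolding CG_def by simp
    show "cneg K G p x \<otimes>\<^bsub>CG K G p\<^esub> x = \<one>\<^bsub>CG K G p\<^esub>"
      unfolding CG_def
    proof (simp, intro ext)
      fix n k
      interpret Gi: comm_group "G (n - p)" by (rule cg)
      show "cadd K G p (cneg K G p x) x n k = czero K G p n k"
        using a cochainsD[of x p k n] unfolding CG_def cadd_def czero_def cneg_def by simp
    qed
  qed
qed

lemma CG_fin: "finite (cochains K G p)"
proof -
  define I where "I = (SIGMA n:{n. K n \<noteq> {}}. K n)"
  define F where "F f = (\<lambda>(n, x)\<in>I. f n x)" for f :: "int \<Rightarrow> 'k \<Rightarrow> 'g"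
  have fI: "finite I" unfolding I_def using finI finK by (intro finite_SigmaI) auto
  have inj: "inj_on F (cochains K G p)"
  proof (rule inj_onI)
    fix f g assume a: "f \<in> cochains K G p" "g \<in> cochains K G p" "F f = F g"
    show "f = g"
    proof (rule cochains_eqI[OF a(1,2)])
      fix n x assume x: "x \<in> K n"
      then have "(n, x) \<in> I" unfolding I_def by auto
      then show "f n x = g n x" using fun_cong[OF a(3), of "(n, x)"] unfolding F_def by simp
    qed
  qed
  have sub: "F ` cochains K G p \<subseteq> PiE I (\<lambda>(n, x). carrier (G (n - p)))"
  proof
    fix h assume "h \<in> F ` cochains K G p"
    then obtain f where f: "f \<in> cochains K G p" "h = F f" by blast
    show "h \<in> PiE I (\<lambda>(n, x). carrier (G (n - p)))"
      unfolding f(2) F_def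
    proof (rule PiE_I)
      fix nx assume "nx \<in> I"
      then show "(\<lambda>(n, x)\<in>I. f n x) nx \<in> (\<lambda>(n, x). carrier (G (n - p))) nx"
        unfolding I_def using cochainsD(1)[OF f(1)] by auto
    qed simp
  qed
  have fP: "finite (PiE I (\<lambda>(n, x). carrier (G (n - p))))"
    using fI finG by (intro finite_PiE) auto
  show ?thesis using finite_imageD[OF finite_subset[OF sub fP] inj] .
qed

lemma CG_fcg: "fcg (CG K G p)"
  unfolding fcg_def fcg_axioms_def using CG_cg CG_fin unfolding CG_def by simp

lemma chars_CG: "chars (CG K G p) = dchains K G p"
  unfolding chars_def dchains_def ischar_def CG_def by auto

lemma CG_simps: "carrier (CG K G p) = cochains K G p" "monoid.mult (CG K G p) = cadd K G p"
  "one (CG K G p) = czero K G p"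
  unfolding CG_def by simp_all

lemma CG_inv: assumes "f \<in> cochains K G p" shows "inv\<^bsub>CG K G p\<^esub> f = cneg K G p f"
proof -
  interpret C: comm_group "CG K G p" by (rule CG_cg)
  have "cneg K G p f \<otimes>\<^bsub>CG K G p\<^esub> f = \<one>\<^bsub>CG K G p\<^esub>"
    unfolding CG_simps
  proof (intro ext)
    fix n k
    interpret Gi: comm_group "G (n - p)" by (rule cg)
    show "cadd K G p (cneg K G p f) f n k = czero K G p n k"
      using assms cochainsD[of f p k n] unfolding cadd_def czero_def cneg_def by simp
  qed
  then show ?thesis using C.inv_equality assms cneg_in by (simp add: CG_simps)
qed

end

context sett begin

lemma dGh': "q = m - 1 \<Longrightarrow> dG m \<in> hom (G m) (G q)" using dGh by simp

lemma dG_closed: "q = m - 1 \<Longrightarrow> a \<in> carrier (G m) \<Longrightarrow> dG m a \<in> carrier (G q)"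
  using dGh'[of q m] by (auto simp: hom_def Pi_def)

lemma cobdry_val:
  "x \<in> K n \<Longrightarrow> cobdry K dC G dG p f n x =
     finprod (G (n - 1 - p)) (\<lambda>y. f (n - 1) y [^]\<^bsub>G (n - 1 - p)\<^esub> dC n x y) (K (n - 1))
      \<otimes>\<^bsub>G (n - 1 - p)\<^esub>
      (if even p then inv\<^bsub>G (n - 1 - p)\<^esub> (dG (n - p) (f n x)) else dG (n - p) (f n x))"
  unfolding cobdry_def by simp

lemma cobdry_in:
  assumes f: "f \<in> cochains K G p" and q: "q = p + 1"
  shows "cobdry K dC G dG p f \<in> cochains K G q"
  unfolding cochains_def
proof (intro CollectI allI conjI impI)
  fix n x assume x: "x \<in> K n"
  interpret H: comm_group "G (n - 1 - p)" by (rule cg)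
  have e: "n - q = n - 1 - p" using q by simp
  have c1: "f (n - 1) y \<in> carrier (G (n - 1 - p))" if "y \<in> K (n - 1)" for y
    using cochainsD(1)[OF f that] .
  have c2: "dG (n - p) (f n x) \<in> carrier (G (n - 1 - p))"
    by (rule dG_closed) (auto intro: cochainsD(1)[OF f x])
  show "cobdry K dC G dG p f n x \<in> carrier (G (n - q))"
    unfolding e cobdry_val[OF x] using c1 c2 by (auto intro!: H.finprod_closed)
next
  fix n x assume "x \<notin> K n"
  then show "cobdry K dC G dG p f n x = undefined" unfolding cobdry_def by simp
qed

lemma cobdry_hom:
  assumes f: "f \<in> cochains K G p" and g: "g \<in> cochains K G p" and q: "q = p + 1"
  shows "cobdry K dC G dG p (cadd K G p f g) = cadd K G q (cobdry K dC G dG p f) (cobdry K dC G dG p g)"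
proof (intro ext)
  fix n x
  show "cobdry K dC G dG p (cadd K G p f g) n x = cadd K G q (cobdry K dC G dG p f) (cobdry K dC G dG p g) n x"
  proof (cases "x \<in> K n")
    case False then show ?thesis unfolding cobdry_def cadd_def by simp
  next
    case x: True
    interpret H: comm_group "G (n - 1 - p)" by (rule cg)
    interpret Hs: comm_group "G (n - p)" by (rule cg)
    have e: "n - q = n - 1 - p" using q by simp
    have hh: "dG (n - p) \<in> hom (G (n - p)) (G (n - 1 - p))" by (rule dGh') simp
    have fc: "f (n - 1) y \<in> carrier (G (n - 1 - p))" "g (n - 1) y \<in> carrier (G (n - 1 - p))"
      if "y \<in> K (n - 1)" for y
      using cochainsD(1)[OF f that] cochainsD(1)[OF g that] by auto
    have fx: "f n x \<in> carrier (G (n - p))" "g n x \<in> carrier (G (n - p))"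
      using cochainsD(1)[OF f x] cochainsD(1)[OF g x] by auto
    have hf: "dG (n - p) (f n x) \<in> carrier (G (n - 1 - p))" "dG (n - p) (g n x) \<in> carrier (G (n - 1 - p))"
      using dG_closed[of "n - 1 - p" "n - p"] fx by auto
    have hm: "dG (n - p) (f n x \<otimes>\<^bsub>G (n - p)\<^esub> g n x) = dG (n - p) (f n x) \<otimes>\<^bsub>G (n - 1 - p)\<^esub> dG (n - p) (g n x)"
      using hh fx by (simp add: hom_mult)
    define a where "a = dG (n - p) (f n x)"
    define b where "b = dG (n - p) (g n x)"
    define P where "P = finprod (G (n - 1 - p)) (\<lambda>y. f (n - 1) y [^]\<^bsub>G (n - 1 - p)\<^esub> dC n x y) (K (n - 1))"
    define Q where "Q = finprod (G (n - 1 - p)) (\<lambda>y. g (n - 1) y [^]\<^bsub>G (n - 1 - p)\<^esub> dC n x y) (K (n - 1))"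
    have ab: "a \<in> carrier (G (n - 1 - p))" "b \<in> carrier (G (n - 1 - p))" using hf a_def b_def by auto
    have PQ: "P \<in> carrier (G (n - 1 - p))" "Q \<in> carrier (G (n - 1 - p))"
      unfolding P_def Q_def using fc by (auto intro!: H.finprod_closed)
    have "finprod (G (n - 1 - p)) (\<lambda>y. cadd K G p f g (n - 1) y [^]\<^bsub>G (n - 1 - p)\<^esub> dC n x y) (K (n - 1))
        = finprod (G (n - 1 - p)) (\<lambda>y. f (n - 1) y [^]\<^bsub>G (n - 1 - p)\<^esub> dC n x y
             \<otimes>\<^bsub>G (n - 1 - p)\<^esub> g (n - 1) y [^]\<^bsub>G (n - 1 - p)\<^esub> dC n x y) (K (n - 1))"
      using fc by (intro H.finprod_cong') (auto simp: cadd_def H.int_pow_distrib Pi_def)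
    also have "\<dots> = P \<otimes>\<^bsub>G (n - 1 - p)\<^esub> Q" unfolding P_def Q_def using fc
      by (intro H.finprod_multf) (auto simp: Pi_def)
    finally have pr: "finprod (G (n - 1 - p)) (\<lambda>y. cadd K G p f g (n - 1) y [^]\<^bsub>G (n - 1 - p)\<^esub> dC n x y) (K (n - 1))
        = P \<otimes>\<^bsub>G (n - 1 - p)\<^esub> Q" .
    have "cobdry K dC G dG p (cadd K G p f g) n x
        = (P \<otimes>\<^bsub>G (n - 1 - p)\<^esub> Q) \<otimes>\<^bsub>G (n - 1 - p)\<^esub>
          (if even p then inv\<^bsub>G (n - 1 - p)\<^esub> (a \<otimes>\<^bsub>G (n - 1 - p)\<^esub> b) else a \<otimes>\<^bsub>G (n - 1 - p)\<^esub> b)"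
      unfolding cobdry_val[OF x] pr using x hm by (simp add: cadd_def a_def b_def)
    also have "\<dots> = (P \<otimes>\<^bsub>G (n - 1 - p)\<^esub> (if even p then inv\<^bsub>G (n - 1 - p)\<^esub> a else a))
        \<otimes>\<^bsub>G (n - 1 - p)\<^esub> (Q \<otimes>\<^bsub>G (n - 1 - p)\<^esub> (if even p then inv\<^bsub>G (n - 1 - p)\<^esub> b else b))"
      using ab PQ by (cases "even p") (simp_all add: H.inv_mult H.m_ac)
    also have "\<dots> = cadd K G q (cobdry K dC G dG p f) (cobdry K dC G dG p g) n x"
      using x by (simp add: cadd_def e cobdry_val P_def Q_def a_def b_def)
    finally show ?thesis .
  qed
qed

end

context sett begin

lemma u_val: "y \<in> K m \<Longrightarrow> cobdry K dC G dG (-1) t m y =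
   finprod (G m) (\<lambda>z. t (m - 1) z [^]\<^bsub>G m\<^esub> dC m y z) (K (m - 1)) \<otimes>\<^bsub>G m\<^esub> dG (m + 1) (t m y)"
  unfolding cobdry_def by simp

lemma dd0:
  assumes t: "t \<in> cochains K G (-1)"
  shows "cobdry K dC G dG 0 (cobdry K dC G dG (-1) t) = czero K G 1"
proof (intro ext)
  fix n x
  show "cobdry K dC G dG 0 (cobdry K dC G dG (-1) t) n x = czero K G 1 n x"
  proof (cases "x \<in> K n")
    case False then show ?thesis unfolding cobdry_def czero_def by simp
  next
    case x: True
    interpret H: comm_group "G (n - 1)" by (rule cg)
    interpret Hs: comm_group "G n" by (rule cg)
    have hh: "dG n \<in> hom (G n) (G (n - 1))" by (rule dGh') simp
    define u where "u = cobdry K dC G dG (-1) t"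
    have t2: "t (n - 2) z \<in> carrier (G (n - 1))" if "z \<in> K (n - 2)" for z
      using cochainsD(1)[OF t that] by simp
    have t1: "t (n - 1) y \<in> carrier (G n)" if "y \<in> K (n - 1)" for y
      using cochainsD(1)[OF t that] by simp
    have t0: "t n x \<in> carrier (G (n + 1))" using cochainsD(1)[OF t x] by simp
    define A where "A y = finprod (G (n - 1)) (\<lambda>z. t (n - 2) z [^]\<^bsub>G (n - 1)\<^esub> dC (n - 1) y z) (K (n - 2))" for y
    define B where "B y = dG n (t (n - 1) y)" for y
    have Ac: "A y \<in> carrier (G (n - 1))" for y unfolding A_def using t2 by (auto intro!: H.finprod_closed)
    have Bc: "B y \<in> carrier (G (n - 1))" if "y \<in> K (n - 1)" for y
      unfolding B_def using dG_closed[of "n - 1" n] t1[OF that] by simp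
    have uy: "u (n - 1) y = A y \<otimes>\<^bsub>G (n - 1)\<^esub> B y" if "y \<in> K (n - 1)" for y
      unfolding u_def A_def B_def using u_val[OF that, of t] by (simp add: algebra_simps)
    define P where "P = finprod (G (n - 1)) (\<lambda>y. B y [^]\<^bsub>G (n - 1)\<^esub> dC n x y) (K (n - 1))"
    have Pc: "P \<in> carrier (G (n - 1))" unfolding P_def using Bc by (auto intro!: H.finprod_closed)
    have ux: "u n x = finprod (G n) (\<lambda>y. t (n - 1) y [^]\<^bsub>G n\<^esub> dC n x y) (K (n - 1)) \<otimes>\<^bsub>G n\<^esub> dG (n + 1) (t n x)"
      unfolding u_def using u_val[OF x] .
    have dd: "dG n (dG (n + 1) (t n x)) = \<one>\<^bsub>G (n - 1)\<^esub>" using dGG[OF t0] by simp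
    have dgc: "dG (n + 1) (t n x) \<in> carrier (G n)" using dG_closed[of n "n + 1"] t0 by simp
    have fpc: "finprod (G n) (\<lambda>y. t (n - 1) y [^]\<^bsub>G n\<^esub> dC n x y) (K (n - 1)) \<in> carrier (G n)"
      using t1 by (auto intro!: Hs.finprod_closed)
    have "dG n (u n x) = dG n (finprod (G n) (\<lambda>y. t (n - 1) y [^]\<^bsub>G n\<^esub> dC n x y) (K (n - 1)))
          \<otimes>\<^bsub>G (n - 1)\<^esub> dG n (dG (n + 1) (t n x))"
      unfolding ux using hh fpc dgc by (simp add: hom_mult)
    also have "dG n (finprod (G n) (\<lambda>y. t (n - 1) y [^]\<^bsub>G n\<^esub> dC n x y) (K (n - 1)))
        = finprod (G (n - 1)) (\<lambda>y. dG n (t (n - 1) y [^]\<^bsub>G n\<^esub> dC n x y)) (K (n - 1))"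
      using t1 by (intro hom_finprod_cg[OF cg cg hh finK]) (auto simp: Pi_def)
    also have "\<dots> = P" unfolding P_def B_def
      using t1 hh by (intro H.finprod_cong') (auto simp: Pi_def hom_int_pow comm_group.axioms(2)[OF cg] intro!: dG_closed)
    finally have dux: "dG n (u n x) = P" using dd Pc by simp
    have "finprod (G (n - 1)) (\<lambda>y. u (n - 1) y [^]\<^bsub>G (n - 1)\<^esub> dC n x y) (K (n - 1))
        = finprod (G (n - 1)) (\<lambda>y. A y [^]\<^bsub>G (n - 1)\<^esub> dC n x y \<otimes>\<^bsub>G (n - 1)\<^esub> B y [^]\<^bsub>G (n - 1)\<^esub> dC n x y) (K (n - 1))"
      using Ac Bc uy by (intro H.finprod_cong') (auto simp: H.int_pow_distrib Pi_def)
    also have "\<dots> = finprod (G (n - 1)) (\<lambda>y. A y [^]\<^bsub>G (n - 1)\<^esub> dC n x y) (K (n - 1)) \<otimes>\<^bsub>G (n - 1)\<^esub> P"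
      unfolding P_def using Ac Bc by (intro H.finprod_multf) (auto simp: Pi_def)
    also have "finprod (G (n - 1)) (\<lambda>y. A y [^]\<^bsub>G (n - 1)\<^esub> dC n x y) (K (n - 1))
       = finprod (G (n - 1)) (\<lambda>y. finprod (G (n - 1)) (\<lambda>z. t (n - 2) z [^]\<^bsub>G (n - 1)\<^esub> (dC (n - 1) y z * dC n x y)) (K (n - 2))) (K (n - 1))"
    proof (intro H.finprod_cong')
      fix y assume "y \<in> K (n - 1)"
      show "A y [^]\<^bsub>G (n - 1)\<^esub> dC n x y = finprod (G (n - 1)) (\<lambda>z. t (n - 2) z [^]\<^bsub>G (n - 1)\<^esub> (dC (n - 1) y z * dC n x y)) (K (n - 2))"
        unfolding A_def using t2 finK
        by (subst H.finprod_int_pow) (auto simp: Pi_def H.int_pow_pow intro!: H.finprod_cong')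
    qed (auto intro!: H.finprod_closed simp: Pi_def t2)
    also have "\<dots> = finprod (G (n - 1)) (\<lambda>z. finprod (G (n - 1)) (\<lambda>y. t (n - 2) z [^]\<^bsub>G (n - 1)\<^esub> (dC (n - 1) y z * dC n x y)) (K (n - 1))) (K (n - 2))"
      using t2 finK by (intro H.finprod_swap) auto
    also have "\<dots> = finprod (G (n - 1)) (\<lambda>z. \<one>\<^bsub>G (n - 1)\<^esub>) (K (n - 2))"
    proof (intro H.finprod_cong')
      fix z assume z: "z \<in> K (n - 2)"
      have "finprod (G (n - 1)) (\<lambda>y. t (n - 2) z [^]\<^bsub>G (n - 1)\<^esub> (dC (n - 1) y z * dC n x y)) (K (n - 1))
          = t (n - 2) z [^]\<^bsub>G (n - 1)\<^esub> (\<Sum>y\<in>K (n - 1). dC (n - 1) y z * dC n x y)"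
        using t2[OF z] finK by (rule_tac H.finprod_pow_sum) auto
      also have "(\<Sum>y\<in>K (n - 1). dC (n - 1) y z * dC n x y) = 0"
        using dCC[OF x z] by (simp add: mult.commute)
      finally show "finprod (G (n - 1)) (\<lambda>y. t (n - 2) z [^]\<^bsub>G (n - 1)\<^esub> (dC (n - 1) y z * dC n x y)) (K (n - 1)) = \<one>\<^bsub>G (n - 1)\<^esub>"
        by simp
    qed auto
    finally have "finprod (G (n - 1)) (\<lambda>y. u (n - 1) y [^]\<^bsub>G (n - 1)\<^esub> dC n x y) (K (n - 1)) = P"
      using Pc by simp
    then have "cobdry K dC G dG 0 u n x = P \<otimes>\<^bsub>G (n - 1)\<^esub> inv\<^bsub>G (n - 1)\<^esub> P"
      using cobdry_val[OF x, of 0 u] dux by simp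
    also have "\<dots> = \<one>\<^bsub>G (n - 1)\<^esub>" using Pc by simp
    finally show ?thesis unfolding u_def czero_def using x by simp
  qed
qed

end

context sett begin

abbreviation "d1 \<equiv> cobdry K dC G dG (-1)"
abbreviation "d0 \<equiv> cobdry K dC G dG 0"

lemma d1_hom: "group_hom (CG K G (-1)) (CG K G 0) d1"
proof -
  have "d1 \<in> hom (CG K G (-1)) (CG K G 0)"
    unfolding hom_def using cobdry_in[where p="-1" and q=0] cobdry_hom[where p="-1" and q=0] by (auto simp: CG_simps Pi_def)
  then show ?thesis
    using CG_cg by (intro group_hom.intro group_hom_axioms.intro) (auto intro: comm_group.axioms(2))
qed

lemma d0_hom: "group_hom (CG K G 0) (CG K G 1) d0"
proof -
  have "d0 \<in> hom (CG K G 0) (CG K G 1)"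
    unfolding hom_def using cobdry_in[where p=0 and q=1] cobdry_hom[where p=0 and q=1] by (auto simp: CG_simps Pi_def)
  then show ?thesis
    using CG_cg by (intro group_hom.intro group_hom_axioms.intro) (auto intro: comm_group.axioms(2))
qed

lemma Aop_val:
  assumes "t \<in> cochains K G (-1)"
  shows "Aop K dC G dG t \<psi> g = (if g \<in> cochains K G 0 then \<psi> (g \<otimes>\<^bsub>CG K G 0\<^esub> inv\<^bsub>CG K G 0\<^esub> d1 t) else 0)"
  using CG_inv[OF cobdry_in[OF assms, of 0]] unfolding Aop_def Pop_def by (simp add: CG_simps)

lemma calB_val:
  assumes v: "v \<in> cochains K G 1"
  shows "calB K dC G dG v \<psi> g =
    (if g \<in> cochains K G 0 \<and> v \<otimes>\<^bsub>CG K G 1\<^esub> d0 g = \<one>\<^bsub>CG K G 1\<^esub> then \<psi> g else 0)"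
proof -
  interpret V: fcg "CG K G 1" by (rule CG_fcg)
  have cV: "card (dchains K G 1) = card (cochains K G 1)"
    using V.card_chars by (simp add: chars_CG CG_simps)
  have cpos: "card (cochains K G 1) > 0" using CG_fin czero_in card_gt_0_iff by blast
  show ?thesis
  proof (cases "g \<in> cochains K G 0")
    case False
    then show ?thesis unfolding calB_def Bop_def Qop_def by simp
  next
    case g: True
    have dg: "d0 g \<in> cochains K G 1" using cobdry_in[OF g] by simp
    have "(\<Sum>m\<in>dchains K G 1. m v * Bop K dC G dG m \<psi> g) = (\<Sum>m\<in>dchains K G 1. m (v \<otimes>\<^bsub>CG K G 1\<^esub> d0 g)) * \<psi> g"
      unfolding sum_distrib_right
    proof (rule sum.cong)
      fix m assume m: "m \<in> dchains K G 1"
      then have m': "m \<in> chars (CG K G 1)" by (simp add: chars_CG)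
      show "m v * Bop K dC G dG m \<psi> g = m (v \<otimes>\<^bsub>CG K G 1\<^esub> d0 g) * \<psi> g"
        using V.chars_D(2)[OF m', of v "d0 g"] v dg g
        unfolding Bop_def Qop_def dual_bdry_def by (simp add: CG_simps)
    qed simp
    also have "\<dots> = (if v \<otimes>\<^bsub>CG K G 1\<^esub> d0 g = \<one>\<^bsub>CG K G 1\<^esub> then of_nat (card (dchains K G 1)) else 0) * \<psi> g"
      using V.orth_m[of "v \<otimes>\<^bsub>CG K G 1\<^esub> d0 g"] v dg by (simp add: chars_CG CG_simps cadd_in)
    finally show ?thesis using g cV cpos unfolding calB_def by simp
  qed
qed

end

context sett begin

lemma X_shift:
  assumes g: "g \<in> cochains K G 0" and t: "t \<in> cochains K G (-1)"
  shows "g \<otimes>\<^bsub>CG K G 0\<^esub> inv\<^bsub>CG K G 0\<^esub> d1 t \<in> cochains K G 0"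
    and "d0 (g \<otimes>\<^bsub>CG K G 0\<^esub> inv\<^bsub>CG K G 0\<^esub> d1 t) = d0 g"
proof -
  interpret X: comm_group "CG K G 0" by (rule CG_cg)
  interpret V: comm_group "CG K G 1" by (rule CG_cg)
  interpret h0: group_hom "CG K G 0" "CG K G 1" d0 by (rule d0_hom)
  interpret h1: group_hom "CG K G (-1)" "CG K G 0" d1 by (rule d1_hom)
  have d1t: "d1 t \<in> carrier (CG K G 0)" using cobdry_in[OF t, of 0] by (simp add: CG_simps)
  show "g \<otimes>\<^bsub>CG K G 0\<^esub> inv\<^bsub>CG K G 0\<^esub> d1 t \<in> cochains K G 0"
    using g d1t by (simp add: CG_simps[symmetric])
  have "d0 (d1 t) = \<one>\<^bsub>CG K G 1\<^esub>" using dd0[OF t] by (simp add: CG_simps)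
  then show "d0 (g \<otimes>\<^bsub>CG K G 0\<^esub> inv\<^bsub>CG K G 0\<^esub> d1 t) = d0 g"
    using g d1t by (simp add: CG_simps[symmetric] h0.hom_mult h0.hom_inv)
qed

lemma calA_zero: "g \<notin> cochains K G 0 \<Longrightarrow> calA K dC G dG s \<psi> g = 0"
  unfolding calA_def Aop_def Pop_def by simp

lemma calA_val:
  assumes g: "g \<in> cochains K G 0"
  shows "calA K dC G dG s \<psi> g = 1 / of_nat (card (cochains K G (-1))) *
     (\<Sum>t\<in>cochains K G (-1). s t * \<psi> (g \<otimes>\<^bsub>CG K G 0\<^esub> inv\<^bsub>CG K G 0\<^esub> d1 t))"
  unfolding calA_def using Aop_val g by (simp cong: sum.cong)

lemma part_comm:
  assumes v: "v \<in> cochains K G 1"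
  shows "calA K dC G dG s (calB K dC G dG v \<psi>) = calB K dC G dG v (calA K dC G dG s \<psi>)"
proof (rule ext)
  fix g
  show "calA K dC G dG s (calB K dC G dG v \<psi>) g = calB K dC G dG v (calA K dC G dG s \<psi>) g"
  proof (cases "g \<in> cochains K G 0")
    case False
    then show ?thesis using calA_zero calB_val[OF v] by simp
  next
    case g: True
    have "calA K dC G dG s (calB K dC G dG v \<psi>) g = 1 / of_nat (card (cochains K G (-1))) *
     (\<Sum>t\<in>cochains K G (-1). s t * (if v \<otimes>\<^bsub>CG K G 1\<^esub> d0 g = \<one>\<^bsub>CG K G 1\<^esub> then \<psi> (g \<otimes>\<^bsub>CG K G 0\<^esub> inv\<^bsub>CG K G 0\<^esub> d1 t) else 0))"
      unfolding calA_val[OF g] using X_shift[OF g] calB_val[OF v] by (simp cong: sum.cong)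
    also have "\<dots> = calB K dC G dG v (calA K dC G dG s \<psi>) g"
      unfolding calB_val[OF v] calA_val[OF g] using g by simp
    finally show ?thesis .
  qed
qed

lemma part_BB:
  assumes v: "v \<in> cochains K G 1" and v': "v' \<in> cochains K G 1"
  shows "calB K dC G dG v (calB K dC G dG v' \<psi>) = (\<lambda>g. (if v = v' then 1 else 0) * calB K dC G dG v \<psi> g)"
proof (rule ext)
  fix g
  interpret V: comm_group "CG K G 1" by (rule CG_cg)
  show "calB K dC G dG v (calB K dC G dG v' \<psi>) g = (if v = v' then 1 else 0) * calB K dC G dG v \<psi> g"
  proof (cases "g \<in> cochains K G 0")
    case False
    then show ?thesis using calB_val[OF v] by simp
  next
    case g: True
    have dg: "d0 g \<in> carrier (CG K G 1)" using cobdry_in[OF g, of 1] by (simp add: CG_simps)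
    have uniq: "v = v'" if "v \<otimes>\<^bsub>CG K G 1\<^esub> d0 g = \<one>\<^bsub>CG K G 1\<^esub>" "v' \<otimes>\<^bsub>CG K G 1\<^esub> d0 g = \<one>\<^bsub>CG K G 1\<^esub>"
      using that v v' dg by (metis CG_simps(1) V.inv_char V.m_comm V.inv_equality)
    show ?thesis unfolding calB_val[OF v] calB_val[OF v'] using g uniq by auto
  qed
qed

lemma part_Bsum:
  assumes psi: "\<psi> \<in> Hsp K G"
  shows "(\<lambda>g. \<Sum>v\<in>cochains K G 1. calB K dC G dG v \<psi> g) = \<psi>"
proof (rule ext)
  fix g
  interpret V: comm_group "CG K G 1" by (rule CG_cg)
  show "(\<Sum>v\<in>cochains K G 1. calB K dC G dG v \<psi> g) = \<psi> g"
  proof (cases "g \<in> cochains K G 0")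
    case False
    then show ?thesis using calB_val psi unfolding Hsp_def by simp
  next
    case g: True
    have dg: "d0 g \<in> carrier (CG K G 1)" using cobdry_in[OF g, of 1] by (simp add: CG_simps)
    have iff: "v \<otimes>\<^bsub>CG K G 1\<^esub> d0 g = \<one>\<^bsub>CG K G 1\<^esub> \<longleftrightarrow> v = inv\<^bsub>CG K G 1\<^esub> d0 g"
      if "v \<in> cochains K G 1" for v
      using that dg by (metis CG_simps(1) V.inv_equality V.l_inv)
    have "(\<Sum>v\<in>cochains K G 1. calB K dC G dG v \<psi> g)
        = (\<Sum>v\<in>cochains K G 1. if v = inv\<^bsub>CG K G 1\<^esub> d0 g then \<psi> g else 0)"
      using calB_val g iff by (intro sum.cong) auto
    also have "\<dots> = \<psi> g"
    proof -
      have "inv\<^bsub>CG K G 1\<^esub> d0 g \<in> cochains K G 1" using V.inv_closed[OF dg] by (simp add: CG_simps)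
      then show ?thesis using CG_fin by simp
    qed
    finally show ?thesis .
  qed
qed

end

context sett begin

lemma part_Asum:
  assumes psi: "\<psi> \<in> Hsp K G"
  shows "(\<lambda>g. \<Sum>s\<in>dchains K G (-1). calA K dC G dG s \<psi> g) = \<psi>"
proof (rule ext)
  fix g
  interpret T: fcg "CG K G (-1)" by (rule CG_fcg)
  interpret X: comm_group "CG K G 0" by (rule CG_cg)
  interpret h1: group_hom "CG K G (-1)" "CG K G 0" d1 by (rule d1_hom)
  show "(\<Sum>s\<in>dchains K G (-1). calA K dC G dG s \<psi> g) = \<psi> g"
  proof (cases "g \<in> cochains K G 0")
    case False
    then show ?thesis using calA_zero psi unfolding Hsp_def by simp
  next
    case g: True
    define c where "c = 1 / (of_nat (card (cochains K G (-1))) :: complex)"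
    define \<Psi> where "\<Psi> t = \<psi> (g \<otimes>\<^bsub>CG K G 0\<^esub> inv\<^bsub>CG K G 0\<^esub> d1 t)" for t
    have cD: "card (dchains K G (-1)) = card (cochains K G (-1))"
      using T.card_chars by (simp add: chars_CG CG_simps)
    have cpos: "card (cochains K G (-1)) > 0" using CG_fin czero_in card_gt_0_iff by blast
    have one: "\<one>\<^bsub>CG K G (-1)\<^esub> \<in> cochains K G (-1)" using T.one_closed by (simp add: CG_simps)
    have "(\<Sum>s\<in>dchains K G (-1). calA K dC G dG s \<psi> g)
        = (\<Sum>s\<in>dchains K G (-1). c * (\<Sum>t\<in>cochains K G (-1). s t * \<Psi> t))"
      unfolding calA_val[OF g] c_def \<Psi>_def by simp
    also have "\<dots> = c * (\<Sum>t\<in>cochains K G (-1). (\<Sum>s\<in>dchains K G (-1). s t) * \<Psi> t)"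
      by (simp add: sum_distrib_left[symmetric] sum_distrib_right sum.swap[of _ "dchains K G (-1)"])
    also have "\<dots> = c * (\<Sum>t\<in>cochains K G (-1). (if t = \<one>\<^bsub>CG K G (-1)\<^esub> then of_nat (card (dchains K G (-1))) else 0) * \<Psi> t)"
    proof -
      have o: "(\<Sum>s\<in>dchains K G (-1). s t) = (if t = \<one>\<^bsub>CG K G (-1)\<^esub> then of_nat (card (dchains K G (-1))) else 0)"
        if "t \<in> cochains K G (-1)" for t
        using T.orth_m[of t, unfolded chars_CG] that by (simp add: CG_simps)
      show ?thesis using o by (simp cong: sum.cong)
    qed
    also have "\<dots> = c * of_nat (card (dchains K G (-1))) * \<Psi> \<one>\<^bsub>CG K G (-1)\<^esub>"
    proof -
      have "(\<Sum>t\<in>cochains K G (-1). (if t = \<one>\<^bsub>CG K G (-1)\<^esub> then of_nat (card (dchains K G (-1))) else 0) * \<Psi> t)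
          = (\<Sum>t\<in>cochains K G (-1). if t = \<one>\<^bsub>CG K G (-1)\<^esub> then of_nat (card (dchains K G (-1))) * \<Psi> t else 0)"
        by (rule sum.cong) auto
      also have "\<dots> = of_nat (card (dchains K G (-1))) * \<Psi> \<one>\<^bsub>CG K G (-1)\<^esub>"
        using CG_fin one by (simp add: sum.delta)
      finally show ?thesis by simp
    qed
    also have "\<dots> = \<Psi> \<one>\<^bsub>CG K G (-1)\<^esub>" using cD cpos unfolding c_def by simp
    also have "\<dots> = \<psi> g" unfolding \<Psi>_def using g by (simp add: CG_simps[symmetric])
    finally show ?thesis .
  qed
qed

lemma part_AA:
  assumes s: "s \<in> dchains K G (-1)" and s': "s' \<in> dchains K G (-1)"
  shows "calA K dC G dG s (calA K dC G dG s' \<psi>) = (\<lambda>g. (if s = s' then 1 else 0) * calA K dC G dG s \<psi> g)"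
proof (rule ext)
  fix g
  interpret T: fcg "CG K G (-1)" by (rule CG_fcg)
  interpret X: comm_group "CG K G 0" by (rule CG_cg)
  interpret h1: group_hom "CG K G (-1)" "CG K G 0" d1 by (rule d1_hom)
  have sc: "s \<in> chars (CG K G (-1))" "s' \<in> chars (CG K G (-1))" using s s' by (simp_all add: chars_CG)
  show "calA K dC G dG s (calA K dC G dG s' \<psi>) g = (if s = s' then 1 else 0) * calA K dC G dG s \<psi> g"
  proof (cases "g \<in> cochains K G 0")
    case False
    then show ?thesis using calA_zero by simp
  next
    case g: True
    define c where "c = 1 / (of_nat (card (cochains K G (-1))) :: complex)"
    define \<Psi> where "\<Psi> t = \<psi> (g \<otimes>\<^bsub>CG K G 0\<^esub> inv\<^bsub>CG K G 0\<^esub> d1 t)" for t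
    define S' where "S' = (\<Sum>u\<in>cochains K G (-1). s' u * \<Psi> u)"
    have cpos: "card (cochains K G (-1)) > 0" using CG_fin czero_in card_gt_0_iff by blast
    have gX: "g \<in> carrier (CG K G 0)" using g by (simp add: CG_simps)
    have inner: "calA K dC G dG s' \<psi> (g \<otimes>\<^bsub>CG K G 0\<^esub> inv\<^bsub>CG K G 0\<^esub> d1 t) = c * (cnj (s' t) * S')"
      if t: "t \<in> cochains K G (-1)" for t
    proof -
      have tT: "t \<in> carrier (CG K G (-1))" using t by (simp add: CG_simps)
      have "calA K dC G dG s' \<psi> (g \<otimes>\<^bsub>CG K G 0\<^esub> inv\<^bsub>CG K G 0\<^esub> d1 t)
          = c * (\<Sum>t'\<in>cochains K G (-1). s' t' * \<Psi> (t \<otimes>\<^bsub>CG K G (-1)\<^esub> t'))"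
      proof -
        have "(\<Sum>t'\<in>cochains K G (-1). s' t' * \<psi> (g \<otimes>\<^bsub>CG K G 0\<^esub> inv\<^bsub>CG K G 0\<^esub> d1 t \<otimes>\<^bsub>CG K G 0\<^esub> inv\<^bsub>CG K G 0\<^esub> d1 t'))
           = (\<Sum>t'\<in>cochains K G (-1). s' t' * \<Psi> (t \<otimes>\<^bsub>CG K G (-1)\<^esub> t'))"
        proof (rule sum.cong)
          fix t' assume t': "t' \<in> cochains K G (-1)"
          have t'T: "t' \<in> carrier (CG K G (-1))" using t' by (simp add: CG_simps)
          show "s' t' * \<psi> (g \<otimes>\<^bsub>CG K G 0\<^esub> inv\<^bsub>CG K G 0\<^esub> d1 t \<otimes>\<^bsub>CG K G 0\<^esub> inv\<^bsub>CG K G 0\<^esub> d1 t')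
              = s' t' * \<Psi> (t \<otimes>\<^bsub>CG K G (-1)\<^esub> t')"
            unfolding \<Psi>_def using tT t'T gX by (simp add: h1.hom_mult X.inv_mult X.m_assoc)
        qed simp
        then show ?thesis unfolding calA_val[OF X_shift(1)[OF g t]] c_def by simp
      qed
      also have "(\<Sum>t'\<in>cochains K G (-1). s' t' * \<Psi> (t \<otimes>\<^bsub>CG K G (-1)\<^esub> t'))
          = (\<Sum>t'\<in>cochains K G (-1). s' (inv\<^bsub>CG K G (-1)\<^esub> t \<otimes>\<^bsub>CG K G (-1)\<^esub> (t \<otimes>\<^bsub>CG K G (-1)\<^esub> t')) * \<Psi> (t \<otimes>\<^bsub>CG K G (-1)\<^esub> t'))"
        using tT by (intro sum.cong) (auto simp: CG_simps[symmetric] T.m_assoc[symmetric])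
      also have "\<dots> = (\<Sum>u\<in>cochains K G (-1). s' (inv\<^bsub>CG K G (-1)\<^esub> t \<otimes>\<^bsub>CG K G (-1)\<^esub> u) * \<Psi> u)"
        using T.sum_shift[OF tT, of "\<lambda>u. s' (inv\<^bsub>CG K G (-1)\<^esub> t \<otimes>\<^bsub>CG K G (-1)\<^esub> u) * \<Psi> u"]
        by (simp add: CG_simps)
      also have "\<dots> = (\<Sum>u\<in>cochains K G (-1). cnj (s' t) * (s' u * \<Psi> u))"
        using tT T.chars_D(2)[OF sc(2)] T.chars_inv[OF sc(2) tT]
        by (intro sum.cong) (auto simp: CG_simps[symmetric])
      also have "\<dots> = cnj (s' t) * S'" unfolding S'_def by (simp add: sum_distrib_left)
      finally show ?thesis .
    qed
    have "calA K dC G dG s (calA K dC G dG s' \<psi>) g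
        = c * (\<Sum>t\<in>cochains K G (-1). s t * (c * (cnj (s' t) * S')))"
      unfolding calA_val[OF g] c_def using inner unfolding c_def by (simp cong: sum.cong)
    also have "\<dots> = c * c * S' * (\<Sum>t\<in>cochains K G (-1). s t * cnj (s' t))"
      by (simp add: sum_distrib_left sum_distrib_right algebra_simps)
    also have "\<dots> = c * c * S' * (if s = s' then of_nat (card (cochains K G (-1))) else 0)"
      using T.orth_x[OF sc] by (simp add: CG_simps)
    also have "\<dots> = (if s = s' then 1 else 0) * (c * S')" using cpos unfolding c_def by simp
    also have "c * S' = calA K dC G dG s' \<psi> g"
      unfolding calA_val[OF g] c_def S'_def \<Psi>_def ..
    finally show ?thesis by simp
  qed
qed

lemma main:
  shows "(\<forall>s\<in>dchains K G (-1). \<forall>v\<in>cochains K G 1. \<forall>\<psi>\<in>Hsp K G.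
            calA K dC G dG s (calB K dC G dG v \<psi>) = calB K dC G dG v (calA K dC G dG s \<psi>))
       \<and> (\<forall>s\<in>dchains K G (-1). \<forall>s'\<in>dchains K G (-1). \<forall>\<psi>\<in>Hsp K G.
            calA K dC G dG s (calA K dC G dG s' \<psi>)
              = (\<lambda>g. (if s = s' then 1 else 0) * calA K dC G dG s \<psi> g))
       \<and> (\<forall>v\<in>cochains K G 1. \<forall>v'\<in>cochains K G 1. \<forall>\<psi>\<in>Hsp K G.
            calB K dC G dG v (calB K dC G dG v' \<psi>)
              = (\<lambda>g. (if v = v' then 1 else 0) * calB K dC G dG v \<psi> g))
       \<and> (\<forall>\<psi>\<in>Hsp K G. (\<lambda>g. \<Sum>s\<in>dchains K G (-1). calA K dC G dG s \<psi> g) = \<psi>)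
       \<and> (\<forall>\<psi>\<in>Hsp K G. (\<lambda>g. \<Sum>v\<in>cochains K G 1. calB K dC G dG v \<psi> g) = \<psi>)"
  using part_comm part_AA part_BB part_Asum part_Bsum by blast

end

theorem lemma1:
  fixes K :: "int \<Rightarrow> 'k set" and dC :: "int \<Rightarrow> 'k \<Rightarrow> 'k \<Rightarrow> int"
    and G :: "int \<Rightarrow> 'g monoid" and dG :: "int \<Rightarrow> 'g \<Rightarrow> 'g"
  assumes "setting K dC G dG"
  shows "(\<forall>s\<in>dchains K G (-1). \<forall>v\<in>cochains K G 1. \<forall>\<psi>\<in>Hsp K G.
            calA K dC G dG s (calB K dC G dG v \<psi>) = calB K dC G dG v (calA K dC G dG s \<psi>))
       \<and> (\<forall>s\<in>dchains K G (-1). \<forall>s'\<in>dchains K G (-1). \<forall>\<psi>\<in>Hsp K G.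
            calA K dC G dG s (calA K dC G dG s' \<psi>)
              = (\<lambda>g. (if s = s' then 1 else 0) * calA K dC G dG s \<psi> g))
       \<and> (\<forall>v\<in>cochains K G 1. \<forall>v'\<in>cochains K G 1. \<forall>\<psi>\<in>Hsp K G.
            calB K dC G dG v (calB K dC G dG v' \<psi>)
              = (\<lambda>g. (if v = v' then 1 else 0) * calB K dC G dG v \<psi> g))
       \<and> (\<forall>\<psi>\<in>Hsp K G. (\<lambda>g. \<Sum>s\<in>dchains K G (-1). calA K dC G dG s \<psi> g) = \<psi>)
       \<and> (\<forall>\<psi>\<in>Hsp K G. (\<lambda>g. \<Sum>v\<in>cochains K G 1. calB K dC G dG v \<psi> g) = \<psi>)"
proof -
  interpret sett K dC G dG by (rule sett.intro) (rule assms)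
  show ?thesis by (rule main)
qed

end
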